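(* Let $D$ be an integral domain with fraction field $K$, and let $R(D)$ be the subring of $K$ generated by $\{1/d \mid d \in D\setminus\{0\}\}$. Then $D$ is Bonaccian if and only if $R(D)$ is a valuation ring (of $K$). Moreover, the following are equivalent: (i) $D$ is Egyptian; (ii) $R(D) = K$; (iii) $D \subseteq R(D)$.
   Context: An element $\alpha\in K$ is called $D$-Egyptian if it is a sum of reciprocals of distinct nonzero elements of $D$. $D$ is Bonaccian if for every nonzero $\alpha \in K$, either $\alpha$ or $\alpha^{-1}$ is $D$-Egyptian. $D$ is Egyptian if every nonzero element of $K$ is $D$-Egyptian. *)

theory Defs
  imports Main
begin

text \<open>We work inside a field K (a type of class field). An integral domain D is
represented as a subring D of K; K is the fraction field of D when every element
of K is a quotient of elements of D.\<close>

definition is_subring :: "'a::field set \<Rightarrow> bool" where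
  "is_subring S \<longleftrightarrow> 0 \<in> S \<and> 1 \<in> S \<and>
     (\<forall>x\<in>S. \<forall>y\<in>S. x + y \<in> S \<and> x - y \<in> S \<and> x * y \<in> S)"

definition is_fraction_field_of :: "'a::field set \<Rightarrow> bool" where
  "is_fraction_field_of D \<longleftrightarrow> (\<forall>x. \<exists>a\<in>D. \<exists>b\<in>D. b \<noteq> 0 \<and> x = a / b)"

definition subring_generated :: "'a::field set \<Rightarrow> 'a set" where
  "subring_generated G = \<Inter>{S. is_subring S \<and> G \<subseteq> S}"

definition R_of :: "'a::field set \<Rightarrow> 'a set" where
  "R_of D = subring_generated {inverse d | d. d \<in> D \<and> d \<noteq> 0}"

definition valuation_ring :: "'a::field set \<Rightarrow> bool" where
  "valuation_ring V \<longleftrightarrow> is_subring V \<and>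
     (\<forall>x. x \<noteq> 0 \<longrightarrow> x \<in> V \<or> inverse x \<in> V)"

definition D_egyptian :: "'a::field set \<Rightarrow> 'a \<Rightarrow> bool" where
  "D_egyptian D \<alpha> \<longleftrightarrow> (\<exists>S. finite S \<and> S \<noteq> {} \<and> S \<subseteq> D - {0} \<and>
     \<alpha> = (\<Sum>d\<in>S. inverse d))"

definition bonaccian :: "'a::field set \<Rightarrow> bool" where
  "bonaccian D \<longleftrightarrow> (\<forall>\<alpha>. \<alpha> \<noteq> 0 \<longrightarrow> D_egyptian D \<alpha> \<or> D_egyptian D (inverse \<alpha>))"

definition egyptian :: "'a::field set \<Rightarrow> bool" where
  "egyptian D \<longleftrightarrow> (\<forall>\<alpha>. \<alpha> \<noteq> 0 \<longrightarrow> D_egyptian D \<alpha>)"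

end

theory Submission
  imports Defs "HOL-Analysis.Harmonic_Numbers"
begin


lemma greedy:
  "0 < c \<Longrightarrow> 1 \<le> m \<Longrightarrow> a*m < c \<Longrightarrow>
   \<exists>T::nat set. finite T \<and> T \<subseteq> {m<..} \<and> real a / real c = (\<Sum>n\<in>T. inverse (real n))"
proof (induction a arbitrary: c m rule: less_induct)
  case (less a)
  show ?case
  proof (cases "a = 0")
    case True thus ?thesis by (intro exI[of _ "{}"]) auto
  next
    case a0: False
    show ?thesis
    proof (cases "c mod a = 0")
      case True
      then obtain k where ck: "c = a * k" by auto
      have "m < k" using less.prems ck a0 by (metis mult_less_cancel1)
      moreover have "real a / real c = inverse (real k)" using ck a0 by (simp add: inverse_eq_divide)
      ultimately show ?thesis by (intro exI[of _ "{k}"]) auto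
    next
      case False
      define n where "n = c div a + 1"
      define r where "r = c mod a"
      have cdec: "c = a * (c div a) + r" unfolding r_def by simp
      have ra: "r < a" "0 < r" using False a0 unfolding r_def by auto
      have an: "a * n = c - r + a" unfolding n_def using cdec by (simp add: algebra_simps)
      have ac: "a < c" using less.prems by (metis le_less_trans mult_le_cancel1 mult.right_neutral not_le)
      have mn: "m < n"
      proof -
        have "a * m < a * (c div a + 1)" using less.prems cdec ra by (simp add: algebra_simps)
        thus ?thesis unfolding n_def by (simp only: mult_less_cancel1)
      qed
      have n0: "0 < n" unfolding n_def by simp
      define a' where "a' = a - r"
      have a'a: "a' < a" unfolding a'_def using ra by simp
      have "a' * n < c * n" unfolding a'_def using ac n0 by simp
      moreover have "1 \<le> n" using n0 by simp
      moreover have "0 < c * n" using less.prems n0 by simp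
      ultimately obtain T where T: "finite T" "T \<subseteq> {n<..}" "real a' / real (c*n) = (\<Sum>n\<in>T. inverse (real n))"
        using less.IH[OF a'a] by blast
      have eq: "real a / real c = inverse (real n) + real a' / real (c*n)"
      proof -
        have "real (a*n) = real c - real r + real a" using an ra ac by simp
        hence "real a * real n = real c - real r + real a" by simp
        moreover have "real a' = real a - real r" unfolding a'_def using ra by simp
        ultimately show ?thesis using n0 less.prems by (simp add: field_simps)
      qed
      have "n \<notin> T" using T by auto
      hence "(\<Sum>x\<in>insert n T. inverse (real x)) = inverse (real n) + (\<Sum>x\<in>T. inverse (real x))"
        using T by simp
      thus ?thesis using T mn eq by (intro exI[of _ "insert n T"]) auto
    qed
  qed
qed

lemma pos_rep:
  assumes b0: "0 < b"
  shows "\<exists>T::nat set. finite T \<and> 0 \<notin> T \<and> real b = (\<Sum>n\<in>T. inverse (real n))"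
proof -
  have "\<forall>\<^sub>F n in sequentially. harm n \<ge> real b"
    using harm_at_top by (simp add: filterlim_at_top)
  then obtain N where "harm N \<ge> (real b :: real)" by (auto simp: eventually_sequentially)
  define N0 where "N0 = (LEAST N. harm N \<ge> (real b :: real))"
  have hN0: "harm N0 \<ge> (real b :: real)" unfolding N0_def by (rule LeastI) fact
  have N0pos: "N0 > 0" using hN0 b0 by (cases N0) (auto simp: harm_def)
  define M where "M = N0 - 1"
  have N0M: "N0 = Suc M" using N0pos unfolding M_def by simp
  have hM: "harm M < (real b :: real)"
  proof (rule ccontr)
    assume "\<not> harm M < (real b :: real)"
    hence "N0 \<le> M" unfolding N0_def by (intro Least_le) simp
    thus False using N0M by simp
  qed
  have hM1: "real b \<le> harm M + inverse (real (Suc M))" using hN0 N0M harm_Suc by metis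
  show ?thesis
  proof (cases "M = 0")
    case True
    hence "real b \<le> 1" using hM1 by (simp add: harm_def)
    hence "b = 1" using b0 by simp
    thus ?thesis by (intro exI[of _ "{1}"]) auto
  next
    case False
    hence M1: "1 \<le> M" by simp
    define F :: nat where "F = fact M"
    define h where "h = (\<Sum>k=1..M. F div k)"
    have F0: "0 < F" unfolding F_def by simp
    have hF: "harm M = real h / real F"
    proof -
      have "real h = (\<Sum>k=1..M. real F / real k)" unfolding h_def of_nat_sum
        by (intro sum.cong refl real_of_nat_div) (auto simp: F_def dvd_fact)
      also have "\<dots> = real F * harm M" unfolding harm_def by (simp add: sum_distrib_left divide_inverse)
      finally show ?thesis using F0 by simp
    qed
    have hlt: "h < b * F" using hM hF F0
      by (metis divide_less_eq of_nat_0_less_iff of_nat_less_iff of_nat_mult)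
    define a where "a = b * F - h"
    have ra: "real a = real b * real F - real h" unfolding a_def using hlt by (simp add: of_nat_diff)
    have rho: "real a / real F = real b - harm M" using ra hF F0 by (simp add: field_simps)
    have "real a / real F < inverse (real M)"
    proof -
      have "inverse (real (Suc M)) < inverse (real M)" using M1 by (simp add: field_simps)
      thus ?thesis using rho hM1 by linarith
    qed
    hence "real a * real M < real F" using M1 F0 by (simp add: field_simps)
    hence "a * M < F" by (metis of_nat_less_iff of_nat_mult)
    then obtain U where U: "finite U" "U \<subseteq> {M<..}" "real a / real F = (\<Sum>n\<in>U. inverse (real n))"
      using greedy[OF F0 M1] by blast
    have disj: "{1..M} \<inter> U = {}" using U by auto
    have "(\<Sum>n\<in>{1..M} \<union> U. inverse (real n)) = harm M + (\<Sum>n\<in>U. inverse (real n))"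
      using sum.union_disjoint[OF _ U(1) disj] by (simp add: harm_def)
    also have "\<dots> = real b" using U(3) rho by simp
    finally show ?thesis using U by (intro exI[of _ "{1..M} \<union> U"]) auto
  qed
qed

lemma int_rep:
  "\<exists>T::int set. finite T \<and> 0 \<notin> T \<and> real_of_int a = (\<Sum>t\<in>T. inverse (real_of_int t))"
proof (cases "a = 0")
  case True thus ?thesis by (intro exI[of _ "{}"]) auto
next
  case False
  have "\<exists>T::int set. finite T \<and> 0 \<notin> T \<and> real (nat \<bar>a\<bar>) = (\<Sum>t\<in>T. inverse (real_of_int t))"
  proof -
    obtain T where T: "finite T" "0 \<notin> T" "real (nat \<bar>a\<bar>) = (\<Sum>n\<in>T. inverse (real n))"
      using pos_rep[of "nat \<bar>a\<bar>"] False by auto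
    have "(\<Sum>t\<in>int ` T. inverse (real_of_int t)) = (\<Sum>n\<in>T. inverse (real n))"
      by (subst sum.reindex) (auto simp: inj_on_def)
    thus ?thesis using T by (intro exI[of _ "int ` T"]) auto
  qed
  then obtain T where T: "finite T" "0 \<notin> T" "real (nat \<bar>a\<bar>) = (\<Sum>t\<in>T. inverse (real_of_int t))" by blast
  show ?thesis
  proof (cases "a > 0")
    case True thus ?thesis using T by (intro exI[of _ T]) auto
  next
    case False
    have "(\<Sum>t\<in>uminus ` T. inverse (real_of_int t)) = - (\<Sum>t\<in>T. inverse (real_of_int t))"
      by (subst sum.reindex) (auto simp: inj_on_def sum_negf)
    moreover have "real_of_int a = - real (nat \<bar>a\<bar>)" using False by simp
    ultimately show ?thesis using T by (intro exI[of _ "uminus ` T"]) auto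
  qed
qed

lemma sum_inv_prod:
  fixes T :: "int set"
  assumes "finite T" "\<forall>t\<in>T. (of_int t :: 'b::field) \<noteq> 0"
  shows "(\<Sum>t\<in>T. inverse (of_int t :: 'b)) * (\<Prod>t\<in>T. of_int t) = of_int (\<Sum>t\<in>T. \<Prod>(T - {t}))"
proof -
  have "(\<Sum>t\<in>T. inverse (of_int t :: 'b)) * (\<Prod>t\<in>T. of_int t) = (\<Sum>t\<in>T. inverse (of_int t :: 'b) * (\<Prod>t\<in>T. of_int t))"
    by (simp add: sum_distrib_right)
  also have "\<dots> = (\<Sum>t\<in>T. (\<Prod>s\<in>T - {t}. of_int s))"
  proof (rule sum.cong[OF refl])
    fix t assume t: "t \<in> T"
    have "(\<Prod>s\<in>T. (of_int s :: 'b)) = of_int t * (\<Prod>s\<in>T - {t}. of_int s)"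
      using prod.remove[OF assms(1) t] .
    thus "inverse (of_int t :: 'b) * (\<Prod>t\<in>T. of_int t) = (\<Prod>s\<in>T - {t}. of_int s)"
      using assms(2) t by simp
  qed
  also have "\<dots> = of_int (\<Sum>t\<in>T. \<Prod>(T - {t}))" by (simp add: of_int_sum of_int_prod)
  finally show ?thesis .
qed

lemma char_cases:
  "(\<forall>k::int. k \<noteq> 0 \<longrightarrow> of_int k \<noteq> (0::'a::field)) \<or> (\<exists>N::nat. N > 0 \<and> of_nat N = (0::'a))"
proof (cases "\<forall>k::int. k \<noteq> 0 \<longrightarrow> of_int k \<noteq> (0::'a::field)")
  case False
  then obtain k :: int where k: "k \<noteq> 0" "of_int k = (0::'a)" by auto
  have "of_int \<bar>k\<bar> = (0::'a)" using k by (simp add: abs_if)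
  hence "of_nat (nat \<bar>k\<bar>) = (0::'a)" by (metis of_int_of_nat_eq int_nat_eq abs_ge_zero)
  thus ?thesis using k by (intro disjI2 exI[of _ "nat \<bar>k\<bar>"]) auto
qed simp

lemma charp_inv:
  assumes N: "N > 0" "of_nat N = (0::'a::field)" and a: "of_int a \<noteq> (0::'a)"
  shows "\<exists>a'. of_int a * of_int a' = (1::'a)"
proof -
  have modeq: "of_int x = (of_int (x mod int N) :: 'a)" for x
  proof -
    have "x = int N * (x div int N) + x mod int N" by simp
    hence "(of_int x :: 'a) = of_int (int N) * of_int (x div int N) + of_int (x mod int N)"
      by (metis of_int_add of_int_mult)
    thus ?thesis using N by simp
  qed
  define f where "f i = (a ^ i) mod int N" for i
  have "f ` {0..N} \<subseteq> {0..<int N}" unfolding f_def using N by auto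
  hence "card (f ` {0..N}) \<le> card {0..<int N}" by (intro card_mono) auto
  hence "card (f ` {0..N}) < card {0..N}" by simp
  hence "\<not> inj_on f {0..N}" by (rule pigeonhole)
  then obtain i j where ij: "i \<noteq> j" "f i = f j" by (auto simp: inj_on_def)
  have eqij: "(of_int a :: 'a) ^ i = of_int a ^ j"
    using ij(2) modeq[of "a^i"] modeq[of "a^j"] unfolding f_def by (metis of_int_power)
  have gen: "\<exists>a'. of_int a * of_int a' = (1::'a)" if "i < j" "(of_int a :: 'a) ^ i = of_int a ^ j" for i j
  proof -
    have "(of_int a :: 'a) ^ j = of_int a ^ i * of_int a ^ (j - i)"
    proof -
      have "j = i + (j - i)" using that by simp
      thus ?thesis by (metis power_add)
    qed
    hence "(of_int a :: 'a) ^ (j - i) = 1" using that a by simp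
    moreover have "j - i = Suc (j - i - 1)" using that by simp
    ultimately have "(of_int a :: 'a) * of_int (a ^ (j - i - 1)) = 1" by (metis power_Suc of_int_power)
    thus ?thesis by blast
  qed
  show ?thesis
  proof (cases "i < j")
    case True thus ?thesis using gen eqij by blast
  next
    case False thus ?thesis using gen[of j i] eqij ij(1) by simp
  qed
qed

lemma ZL:
  assumes "of_int a \<noteq> (0::'a::field)"
  shows "\<exists>T::'a set. finite T \<and> T \<subseteq> {of_int k | k. of_int k \<noteq> (0::'a)} \<and> of_int a = (\<Sum>t\<in>T. inverse t)"
  using char_cases[where 'a='a]
proof
  assume c0: "\<forall>k::int. k \<noteq> 0 \<longrightarrow> of_int k \<noteq> (0::'a)"
  obtain T where T: "finite T" "0 \<notin> T" "real_of_int a = (\<Sum>t\<in>T. inverse (real_of_int t))"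
    using int_rep by blast
  have nz: "\<forall>t\<in>T. (of_int t :: 'a) \<noteq> 0" using T c0 by metis
  have nzr: "\<forall>t\<in>T. (of_int t :: real) \<noteq> 0" using T by auto
  have "real_of_int (a * \<Prod>T) = real_of_int (\<Sum>t\<in>T. \<Prod>(T - {t}))"
    using sum_inv_prod[OF T(1) nzr] T(3) by (simp add: of_int_prod)
  hence ieq: "a * \<Prod>T = (\<Sum>t\<in>T. \<Prod>(T - {t}))" by linarith
  have P0: "(\<Prod>t\<in>T. of_int t :: 'a) \<noteq> 0" using nz T(1) by simp
  have "of_int a * (\<Prod>t\<in>T. of_int t :: 'a) = (\<Sum>t\<in>T. inverse (of_int t :: 'a)) * (\<Prod>t\<in>T. of_int t)"
    unfolding sum_inv_prod[OF T(1) nz] ieq[symmetric] by (simp add: of_int_prod)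
  hence eq: "of_int a = (\<Sum>t\<in>T. inverse (of_int t :: 'a))" using P0 by simp
  have inj: "inj_on (of_int :: int \<Rightarrow> 'a) T"
  proof (rule inj_onI)
    fix x y assume "x \<in> T" "y \<in> T" "(of_int x :: 'a) = of_int y"
    hence "(of_int (x - y) :: 'a) = 0" by simp
    thus "x = y" using c0 by (metis eq_iff_diff_eq_0)
  qed
  have "(\<Sum>t\<in>of_int ` T. inverse t) = (\<Sum>t\<in>T. inverse (of_int t :: 'a))"
    using sum.reindex[OF inj, of inverse] by (simp add: o_def)
  thus ?thesis using eq T nz by (intro exI[of _ "(of_int :: int \<Rightarrow> 'a) ` T"]) auto
next
  assume N: "\<exists>N::nat. N > 0 \<and> of_nat N = (0::'a)"
  then obtain N :: nat where "N > 0" "of_nat N = (0::'a)" by blast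
  then obtain a' where a': "of_int a * of_int a' = (1::'a)" using charp_inv assms by blast
  hence "of_int a' \<noteq> (0::'a)" by auto
  moreover have "of_int a = inverse (of_int a' :: 'a)" using a' by (intro inverse_unique[symmetric]) (simp add: mult.commute)
  ultimately show ?thesis by (intro exI[of _ "{of_int a' :: 'a}"]) auto
qed


definition Egy0 :: "'a::field set \<Rightarrow> 'a set" where
  "Egy0 D = {y. \<exists>S. finite S \<and> S \<subseteq> D - {0} \<and> y = (\<Sum>x\<in>S. inverse x)}"

lemma subring_of_int:
  assumes "is_subring D" shows "of_int k \<in> D"
proof -
  have nat: "of_nat n \<in> D" for n
    by (induction n) (use assms in \<open>auto simp: is_subring_def\<close>)
  show ?thesis
  proof (cases "k \<ge> 0")
    case True thus ?thesis using nat[of "nat k"] by simp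
  next
    case False
    have "0 - of_nat (nat (-k)) \<in> D" using nat assms by (auto simp: is_subring_def)
    thus ?thesis using False by simp
  qed
qed

lemma subring_sum:
  assumes "is_subring V" "\<forall>x\<in>S. f x \<in> V" shows "sum f S \<in> V"
proof (cases "finite S")
  case True
  thus ?thesis using assms(2)
    by (induction S rule: finite_induct) (use assms(1) in \<open>auto simp: is_subring_def\<close>)
next
  case False thus ?thesis using assms by (simp add: is_subring_def)
qed

lemma core:
  assumes D: "is_subring D" and S: "finite S"
  shows "\<forall>d a. S \<subseteq> D - {0} \<longrightarrow> d \<in> D \<longrightarrow> d \<noteq> 0 \<longrightarrow>
           (\<Sum>x\<in>S. inverse x) + of_int a / d \<in> Egy0 D"
  using S
proof (induction S rule: finite_remove_induct)
  case empty
  show ?case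
  proof (intro allI impI)
    fix d :: 'a and a :: int
    assume d: "d \<in> D" "d \<noteq> 0"
    show "(\<Sum>x\<in>{}. inverse x) + of_int a / d \<in> Egy0 D"
    proof (cases "of_int a = (0::'a)")
      case True thus ?thesis unfolding Egy0_def by (auto intro!: exI[of _ "{}"])
    next
      case False
      then obtain T :: "'a set" where T: "finite T" "T \<subseteq> {of_int k | k. of_int k \<noteq> (0::'a)}"
        "of_int a = (\<Sum>t\<in>T. inverse t)" using ZL by blast
      have inj: "inj_on (\<lambda>t. d * t) T" using d by (auto simp: inj_on_def)
      have "of_int a / d = (\<Sum>t\<in>T. inverse (d * t))"
        unfolding T(3) divide_inverse sum_distrib_right by (rule sum.cong[OF refl]) (simp add: mult.commute)
      also have "\<dots> = (\<Sum>y\<in>(\<lambda>t. d * t) ` T. inverse y)" using sum.reindex[OF inj, of inverse] by (simp add: o_def)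
      finally have eq: "of_int a / d = (\<Sum>y\<in>(\<lambda>t. d * t) ` T. inverse y)" .
      have sub: "(\<lambda>t. d * t) ` T \<subseteq> D - {0}"
      proof
        fix y assume "y \<in> (\<lambda>t. d * t) ` T"
        then obtain k where "y = d * of_int k" "of_int k \<noteq> (0::'a)" using T(2) by auto
        thus "y \<in> D - {0}" using d D subring_of_int[OF D, of k] by (auto simp: is_subring_def)
      qed
      show ?thesis unfolding Egy0_def using eq sub T(1) by auto
    qed
  qed
next
  case (remove S)
  show ?case
  proof (intro allI impI)
    fix d :: 'a and a :: int
    assume SD: "S \<subseteq> D - {0}" and d: "d \<in> D" "d \<noteq> 0"
    show "(\<Sum>x\<in>S. inverse x) + of_int a / d \<in> Egy0 D"
    proof (cases "\<exists>x\<in>S. \<exists>k. of_int k \<noteq> (0::'a) \<and> x = d * of_int k")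
      case True
      then obtain x k where x: "x \<in> S" "of_int k \<noteq> (0::'a)" "x = d * of_int k" by blast
      have d': "d * of_int k \<in> D" "d * of_int k \<noteq> 0"
        using d x subring_of_int[OF D, of k] D by (auto simp: is_subring_def)
      have IH: "(\<Sum>y\<in>S - {x}. inverse y) + of_int (1 + a * k) / (d * of_int k) \<in> Egy0 D"
      proof -
        have sub': "S - {x} \<subseteq> D - {0}" using SD by auto
        show ?thesis using remove.IH[OF x(1)] sub' d' by blast
      qed
      have "(\<Sum>y\<in>S. inverse y) = inverse x + (\<Sum>y\<in>S - {x}. inverse y)"
        using sum.remove[OF remove.hyps(1) x(1)] .
      moreover have "inverse x + of_int a / d = of_int (1 + a * k) / (d * of_int k)"
        using x d by (simp add: field_simps)
      ultimately have "(\<Sum>y\<in>S. inverse y) + of_int a / d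
          = (\<Sum>y\<in>S - {x}. inverse y) + of_int (1 + a * k) / (d * of_int k)" by (simp add: algebra_simps)
      thus ?thesis using IH by simp
    next
      case nocol: False
      show ?thesis
      proof (cases "of_int a = (0::'a)")
        case True thus ?thesis unfolding Egy0_def using SD remove.hyps(1) by auto
      next
        case False
        then obtain T :: "'a set" where T: "finite T" "T \<subseteq> {of_int k | k. of_int k \<noteq> (0::'a)}"
          "of_int a = (\<Sum>t\<in>T. inverse t)" using ZL by blast
        have inj: "inj_on (\<lambda>t. d * t) T" using d by (auto simp: inj_on_def)
        have "of_int a / d = (\<Sum>t\<in>T. inverse (d * t))"
          unfolding T(3) divide_inverse sum_distrib_right by (rule sum.cong[OF refl]) (simp add: mult.commute)
        also have "\<dots> = (\<Sum>y\<in>(\<lambda>t. d * t) ` T. inverse y)" using sum.reindex[OF inj, of inverse] by (simp add: o_def)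
        finally have eq: "of_int a / d = (\<Sum>y\<in>(\<lambda>t. d * t) ` T. inverse y)" .
        have sub: "(\<lambda>t. d * t) ` T \<subseteq> D - {0}"
        proof
          fix y assume "y \<in> (\<lambda>t. d * t) ` T"
          then obtain k where "y = d * of_int k" "of_int k \<noteq> (0::'a)" using T(2) by auto
          thus "y \<in> D - {0}" using d D subring_of_int[OF D, of k] by (auto simp: is_subring_def)
        qed
        have disj: "S \<inter> (\<lambda>t. d * t) ` T = {}" using nocol T(2) by blast
        have "(\<Sum>x\<in>S. inverse x) + of_int a / d = (\<Sum>x\<in>S \<union> (\<lambda>t. d * t) ` T. inverse x)"
          using sum.union_disjoint[OF remove.hyps(1) finite_imageI[OF T(1)] disj, of inverse] eq by simp
        moreover have "S \<union> (\<lambda>t. d * t) ` T \<subseteq> D - {0}" using SD sub by auto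
        ultimately show ?thesis unfolding Egy0_def using remove.hyps(1) T(1)
          by (intro CollectI exI[of _ "S \<union> (\<lambda>t. d * t) ` T"]) simp
      qed
    qed
  qed
qed


lemma Egy0_add1:
  assumes D: "is_subring D" and y: "y \<in> Egy0 D" and d: "d \<in> D" "d \<noteq> 0"
  shows "y + inverse d \<in> Egy0 D"
proof -
  obtain S where S: "finite S" "S \<subseteq> D - {0}" "y = (\<Sum>x\<in>S. inverse x)" using y unfolding Egy0_def by auto
  have "(\<Sum>x\<in>S. inverse x) + of_int 1 / d \<in> Egy0 D" using core[OF D S(1)] S(2) d by blast
  thus ?thesis using S(3) by (simp add: inverse_eq_divide)
qed

lemma Egy0_add:
  assumes D: "is_subring D" and y: "y \<in> Egy0 D" and z: "z \<in> Egy0 D"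
  shows "y + z \<in> Egy0 D"
proof -
  obtain S where S: "finite S" "S \<subseteq> D - {0}" "z = (\<Sum>x\<in>S. inverse x)" using z unfolding Egy0_def by auto
  have "S \<subseteq> D - {0} \<longrightarrow> y + (\<Sum>x\<in>S. inverse x) \<in> Egy0 D" using S(1)
  proof (induction S rule: finite_induct)
    case empty thus ?case using y by simp
  next
    case (insert x F)
    show ?case
    proof
      assume "insert x F \<subseteq> D - {0}"
      hence "y + (\<Sum>x\<in>F. inverse x) \<in> Egy0 D" "x \<in> D" "x \<noteq> 0" using insert.IH by auto
      hence "y + (\<Sum>x\<in>F. inverse x) + inverse x \<in> Egy0 D" using Egy0_add1[OF D] by blast
      thus "y + (\<Sum>x\<in>insert x F. inverse x) \<in> Egy0 D" using insert.hyps by (simp add: algebra_simps)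
    qed
  qed
  thus ?thesis using S by simp
qed

lemma Egy0_scale:
  assumes D: "is_subring D" and y: "y \<in> Egy0 D" and d: "d \<in> D" "d \<noteq> 0"
  shows "y * inverse d \<in> Egy0 D"
proof -
  obtain S where S: "finite S" "S \<subseteq> D - {0}" "y = (\<Sum>x\<in>S. inverse x)" using y unfolding Egy0_def by auto
  have inj: "inj_on (\<lambda>s. s * d) S" using d by (auto simp: inj_on_def)
  have "y * inverse d = (\<Sum>s\<in>S. inverse (s * d))" unfolding S(3) by (simp add: sum_distrib_right)
  also have "\<dots> = (\<Sum>x\<in>(\<lambda>s. s * d) ` S. inverse x)" using sum.reindex[OF inj, of inverse] by (simp add: o_def)
  finally have eq: "y * inverse d = (\<Sum>x\<in>(\<lambda>s. s * d) ` S. inverse x)" .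
  have "(\<lambda>s. s * d) ` S \<subseteq> D - {0}" using S(2) d D by (auto simp: is_subring_def)
  thus ?thesis unfolding Egy0_def using eq S(1) by auto
qed

lemma Egy0_mult:
  assumes D: "is_subring D" and y: "y \<in> Egy0 D" and z: "z \<in> Egy0 D"
  shows "y * z \<in> Egy0 D"
proof -
  obtain S where S: "finite S" "S \<subseteq> D - {0}" "z = (\<Sum>x\<in>S. inverse x)" using z unfolding Egy0_def by auto
  have "S \<subseteq> D - {0} \<longrightarrow> y * (\<Sum>x\<in>S. inverse x) \<in> Egy0 D" using S(1)
  proof (induction S rule: finite_induct)
    case empty thus ?case unfolding Egy0_def by (auto intro!: exI[of _ "{}"])
  next
    case (insert x F)
    show ?case
    proof
      assume "insert x F \<subseteq> D - {0}"
      hence "y * (\<Sum>x\<in>F. inverse x) \<in> Egy0 D" "x \<in> D" "x \<noteq> 0" using insert.IH by auto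
      hence "y * inverse x + y * (\<Sum>x\<in>F. inverse x) \<in> Egy0 D" using Egy0_add[OF D] Egy0_scale[OF D y] by blast
      thus "y * (\<Sum>x\<in>insert x F. inverse x) \<in> Egy0 D" using insert.hyps by (simp add: algebra_simps)
    qed
  qed
  thus ?thesis using S by simp
qed

lemma Egy0_neg:
  assumes D: "is_subring D" and y: "y \<in> Egy0 D"
  shows "- y \<in> Egy0 D"
proof -
  obtain S where S: "finite S" "S \<subseteq> D - {0}" "y = (\<Sum>x\<in>S. inverse x)" using y unfolding Egy0_def by auto
  have inj: "inj_on uminus S" by (auto simp: inj_on_def)
  have "- y = (\<Sum>s\<in>S. inverse (- s))" unfolding S(3) by (simp add: sum_negf)
  also have "\<dots> = (\<Sum>x\<in>uminus ` S. inverse x)" using sum.reindex[OF inj, of inverse] by (simp add: o_def)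
  finally have eq: "- y = (\<Sum>x\<in>uminus ` S. inverse x)" .
  have "uminus ` S \<subseteq> D - {0}"
  proof
    fix z assume "z \<in> uminus ` S"
    then obtain x where x: "x \<in> S" "z = - x" by auto
    have xD: "x \<in> D" using x S(2) by auto
    have "0 - x \<in> D" using D xD unfolding is_subring_def by blast
    thus "z \<in> D - {0}" using x S(2) by auto
  qed
  thus ?thesis unfolding Egy0_def using eq S(1) by auto
qed

lemma Egy0_subring:
  assumes D: "is_subring D" shows "is_subring (Egy0 D)"
proof -
  have z: "0 \<in> Egy0 D" unfolding Egy0_def by (auto intro!: exI[of _ "{}"])
  have o: "1 \<in> Egy0 D" unfolding Egy0_def using D
    by (auto simp: is_subring_def intro!: exI[of _ "{1}"])
  have m: "x - y \<in> Egy0 D" if "x \<in> Egy0 D" "y \<in> Egy0 D" for x y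
    using Egy0_add[OF D that(1) Egy0_neg[OF D that(2)]] by simp
  have "\<forall>x\<in>Egy0 D. \<forall>y\<in>Egy0 D. x + y \<in> Egy0 D \<and> x - y \<in> Egy0 D \<and> x * y \<in> Egy0 D"
    using m Egy0_add[OF D] Egy0_mult[OF D] by simp
  thus ?thesis unfolding is_subring_def using z o by simp
qed

lemma subring_generated_subring: "is_subring (subring_generated G)"
  unfolding subring_generated_def is_subring_def by auto

lemma subring_generated_gen: "G \<subseteq> subring_generated G"
  unfolding subring_generated_def by auto

lemma subring_generated_least: "is_subring V \<Longrightarrow> G \<subseteq> V \<Longrightarrow> subring_generated G \<subseteq> V"
  unfolding subring_generated_def by auto

lemma egy_iff_R:
  assumes D: "is_subring D" and a: "\<alpha> \<noteq> 0"
  shows "D_egyptian D \<alpha> \<longleftrightarrow> \<alpha> \<in> R_of D"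
proof
  assume "D_egyptian D \<alpha>"
  then obtain S where S: "S \<subseteq> D - {0}" "\<alpha> = (\<Sum>d\<in>S. inverse d)" unfolding D_egyptian_def by auto
  have "\<forall>x\<in>S. inverse x \<in> R_of D"
  proof
    fix x assume "x \<in> S"
    hence "inverse x \<in> {inverse d | d. d \<in> D \<and> d \<noteq> 0}" using S(1) by blast
    thus "inverse x \<in> R_of D" unfolding R_of_def by (rule subsetD[OF subring_generated_gen])
  qed
  hence "(\<Sum>d\<in>S. inverse d) \<in> R_of D" unfolding R_of_def by (rule subring_sum[OF subring_generated_subring])
  thus "\<alpha> \<in> R_of D" using S(2) by simp
next
  assume "\<alpha> \<in> R_of D"
  moreover have "R_of D \<subseteq> Egy0 D" unfolding R_of_def
  proof (rule subring_generated_least[OF Egy0_subring[OF D]])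
    show "{inverse d | d. d \<in> D \<and> d \<noteq> 0} \<subseteq> Egy0 D"
    proof
      fix y assume "y \<in> {inverse d | d. d \<in> D \<and> d \<noteq> 0}"
      then obtain d where d: "y = inverse d" "d \<in> D" "d \<noteq> 0" by auto
      show "y \<in> Egy0 D" unfolding Egy0_def using d by (intro CollectI exI[of _ "{d}"]) simp
    qed
  qed
  ultimately obtain S where S: "finite S" "S \<subseteq> D - {0}" "\<alpha> = (\<Sum>x\<in>S. inverse x)" unfolding Egy0_def by auto
  have "S \<noteq> {}" using S(3) a by auto
  thus "D_egyptian D \<alpha>" unfolding D_egyptian_def using S by auto
qed

theorem proposition2p4:
  fixes D :: "'a::field set"
  assumes "is_subring D"
    and "is_fraction_field_of D"
  shows "(bonaccian D \<longleftrightarrow> valuation_ring (R_of D))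
    \<and> (egyptian D \<longleftrightarrow> R_of D = UNIV)
    \<and> (R_of D = UNIV \<longleftrightarrow> D \<subseteq> R_of D)"
proof -
  have RS: "is_subring (R_of D)" unfolding R_of_def by (rule subring_generated_subring)
  have R0: "0 \<in> R_of D" using RS by (simp add: is_subring_def)
  have iff: "\<And>\<alpha>. \<alpha> \<noteq> 0 \<Longrightarrow> D_egyptian D \<alpha> \<longleftrightarrow> \<alpha> \<in> R_of D" using egy_iff_R[OF assms(1)] by blast
  have A: "bonaccian D \<longleftrightarrow> valuation_ring (R_of D)"
    unfolding bonaccian_def valuation_ring_def using RS iff by (auto simp del: inverse_eq_divide)
  have B: "egyptian D \<longleftrightarrow> R_of D = UNIV"
  proof
    assume e: "egyptian D"
    have "x \<in> R_of D" for x
      using e iff R0 unfolding egyptian_def by (cases "x = 0") auto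
    thus "R_of D = UNIV" by auto
  next
    assume "R_of D = UNIV"
    thus "egyptian D" unfolding egyptian_def using iff by auto
  qed
  have C: "R_of D = UNIV \<longleftrightarrow> D \<subseteq> R_of D"
  proof
    assume sub: "D \<subseteq> R_of D"
    have "x \<in> R_of D" for x
    proof -
      obtain a b where ab: "a \<in> D" "b \<in> D" "b \<noteq> 0" "x = a / b"
        using assms(2) unfolding is_fraction_field_of_def by blast
      have "inverse b \<in> {inverse d | d. d \<in> D \<and> d \<noteq> 0}" using ab by blast
      hence "inverse b \<in> R_of D" unfolding R_of_def by (rule subsetD[OF subring_generated_gen])
      moreover have "a \<in> R_of D" using ab sub by auto
      ultimately have "a * inverse b \<in> R_of D" using RS by (simp add: is_subring_def)
      thus ?thesis using ab by (simp add: divide_inverse)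
    qed
    thus "R_of D = UNIV" by auto
  qed auto
  show ?thesis using A B C by blast
qed

end
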